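(* Let $\alpha$ be a graph function on a strongly connected digraph $G$, with heights $y$, levels $x$, momenta $m$ and raising imbalances $\rho_v=\rho^R_v$; let $y_{\min}=\min_u y_u$. For every vertex $v$: (i) $m_v\le\rho(S_v)+z_v$; (ii) $y_v-y_{\min}\le|S_v|\cdot\rho(S_v)$.
   Context: $G$ is a strongly connected directed graph (self-loops allowed); $u\to v$ means $(u,v)$ is an edge. A graph function assigns a real weight $\alpha_{uv}$ to each edge. $\alpha_v^{\text{in}}=\max_{u\to v}\alpha_{uv}$, $\alpha_v^{\text{out}}=\max_{v\to w}\alpha_{vw}$, $\rho^R_v=\max\{0,\alpha_v^{\text{out}}-\alpha_v^{\text{in}}\}$. A raising operation at $v$: if $\rho^R_v>0$ add $\rho^R_v/2$ to each incoming edge weight $\alpha_{uv}$ ($u\ne v$) and subtract it from each outgoing $\alpha_{vw}$ ($w\neq v$); otherwise do nothing. Starting from $\alpha$, for any infinite sequence of raising operations in which every vertex occurs infinitely often, the cumulative amount by which each vertex has been raised converges to a limit vector $r^*$ independent of the sequence, and the graph functions converge to the raising-balanced graph function $\alpha^R_{uv}=\alpha_{uv}+r^*_v-r^*_u$. Heights: $y_v=-r^*_v$. Levels: $x_v=\max_{u\to v}\alpha^R_{uv}$. Momentum: $m_v=\max_{u\to v}(\alpha_{uv}-x_v)$. $S_v=\{u: y_u<y_v\}$, $\rho(S_v)=\sum_{u\in S_v}\rho_u$, and $z_v=\max\{x_u: y_u\le y_v\}-x_v$. *)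

theory Defs
  imports "HOL-Analysis.Analysis"
begin

text \<open>A digraph on a finite vertex type 'v is an edge relation E (E u v means u -> v,
self-loops allowed). A graph function is a weight function alpha :: 'v => 'v => real,
whose values are only relevant on edges.\<close>

definition strongly_connected :: "('v \<Rightarrow> 'v \<Rightarrow> bool) \<Rightarrow> bool" where
  "strongly_connected E \<longleftrightarrow> (\<forall>u v. E\<^sup>+\<^sup>+ u v)"

definition alpha_in :: "('v \<Rightarrow> 'v \<Rightarrow> bool) \<Rightarrow> ('v \<Rightarrow> 'v \<Rightarrow> real) \<Rightarrow> 'v \<Rightarrow> real" where
  "alpha_in E \<alpha> v = Max {\<alpha> u v | u. E u v}"

definition alpha_out :: "('v \<Rightarrow> 'v \<Rightarrow> bool) \<Rightarrow> ('v \<Rightarrow> 'v \<Rightarrow> real) \<Rightarrow> 'v \<Rightarrow> real" where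
  "alpha_out E \<alpha> v = Max {\<alpha> v w | w. E v w}"

definition rhoR :: "('v \<Rightarrow> 'v \<Rightarrow> bool) \<Rightarrow> ('v \<Rightarrow> 'v \<Rightarrow> real) \<Rightarrow> 'v \<Rightarrow> real" where
  "rhoR E \<alpha> v = max 0 (alpha_out E \<alpha> v - alpha_in E \<alpha> v)"

definition raise_op :: "('v \<Rightarrow> 'v \<Rightarrow> bool) \<Rightarrow> ('v \<Rightarrow> 'v \<Rightarrow> real) \<Rightarrow> 'v \<Rightarrow> ('v \<Rightarrow> 'v \<Rightarrow> real)" where
  "raise_op E \<alpha> v =
     (if rhoR E \<alpha> v > 0 then
        (\<lambda>a b. \<alpha> a b + (if b = v \<and> a \<noteq> v then rhoR E \<alpha> v / 2 else 0)
                      - (if a = v \<and> b \<noteq> v then rhoR E \<alpha> v / 2 else 0))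
      else \<alpha>)"

fun alpha_seq :: "('v \<Rightarrow> 'v \<Rightarrow> bool) \<Rightarrow> ('v \<Rightarrow> 'v \<Rightarrow> real) \<Rightarrow> (nat \<Rightarrow> 'v) \<Rightarrow> nat \<Rightarrow> ('v \<Rightarrow> 'v \<Rightarrow> real)" where
  "alpha_seq E \<alpha> s 0 = \<alpha>"
| "alpha_seq E \<alpha> s (Suc n) = raise_op E (alpha_seq E \<alpha> s n) (s n)"

definition cum_raise :: "('v \<Rightarrow> 'v \<Rightarrow> bool) \<Rightarrow> ('v \<Rightarrow> 'v \<Rightarrow> real) \<Rightarrow> (nat \<Rightarrow> 'v) \<Rightarrow> nat \<Rightarrow> 'v \<Rightarrow> real" where
  "cum_raise E \<alpha> s n v = (\<Sum>k\<in>{k. k < n \<and> s k = v}. rhoR E (alpha_seq E \<alpha> s k) v / 2)"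

definition fair_seq :: "(nat \<Rightarrow> 'v) \<Rightarrow> bool" where
  "fair_seq s \<longleftrightarrow> (\<forall>v. infinite {n. s n = v})"

definition alphaR :: "('v \<Rightarrow> 'v \<Rightarrow> real) \<Rightarrow> ('v \<Rightarrow> real) \<Rightarrow> 'v \<Rightarrow> 'v \<Rightarrow> real" where
  "alphaR \<alpha> r u v = \<alpha> u v + r v - r u"

definition height :: "('v \<Rightarrow> real) \<Rightarrow> 'v \<Rightarrow> real" where
  "height r v = - r v"

definition level :: "('v \<Rightarrow> 'v \<Rightarrow> bool) \<Rightarrow> ('v \<Rightarrow> 'v \<Rightarrow> real) \<Rightarrow> ('v \<Rightarrow> real) \<Rightarrow> 'v \<Rightarrow> real" where
  "level E \<alpha> r v = Max {alphaR \<alpha> r u v | u. E u v}"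

definition momentum :: "('v \<Rightarrow> 'v \<Rightarrow> bool) \<Rightarrow> ('v \<Rightarrow> 'v \<Rightarrow> real) \<Rightarrow> ('v \<Rightarrow> real) \<Rightarrow> 'v \<Rightarrow> real" where
  "momentum E \<alpha> r v = Max {\<alpha> u v - level E \<alpha> r v | u. E u v}"

definition Sset :: "('v \<Rightarrow> real) \<Rightarrow> 'v \<Rightarrow> 'v set" where
  "Sset r v = {u. height r u < height r v}"

definition rho_set :: "('v \<Rightarrow> 'v \<Rightarrow> bool) \<Rightarrow> ('v \<Rightarrow> 'v \<Rightarrow> real) \<Rightarrow> 'v set \<Rightarrow> real" where
  "rho_set E \<alpha> S = (\<Sum>u\<in>S. rhoR E \<alpha> u)"

definition zval :: "('v \<Rightarrow> 'v \<Rightarrow> bool) \<Rightarrow> ('v \<Rightarrow> 'v \<Rightarrow> real) \<Rightarrow> ('v \<Rightarrow> real) \<Rightarrow> 'v \<Rightarrow> real" where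
  "zval E \<alpha> r v = Max {level E \<alpha> r u | u. height r u \<le> height r v} - level E \<alpha> r v"

end

theory Submission
  imports Defs
begin


lemma MaxP_ge:
  fixes f :: "'v::finite \<Rightarrow> real"
  assumes "P u" shows "f u \<le> Max {f u |u. P u}"
  by (rule Max_ge) (auto intro: assms)

lemma MaxP_le:
  fixes f :: "'v::finite \<Rightarrow> real"
  assumes "\<exists>u. P u" "\<And>u. P u \<Longrightarrow> f u \<le> c" shows "Max {f u |u. P u} \<le> c"
  using assms by (subst Max_le_iff) auto

lemma MaxP_attained:
  fixes f :: "'v::finite \<Rightarrow> real"
  assumes "\<exists>u. P u" shows "\<exists>u. P u \<and> f u = Max {f u |u. P u}"
proof -
  have "Max {f u |u. P u} \<in> {f u |u. P u}"
    by (rule Max_in) (use assms in auto)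
  then show ?thesis by auto
qed

lemma MaxP_lip:
  fixes f g :: "'v::finite \<Rightarrow> real"
  assumes "\<exists>u. P u" "\<And>u. P u \<Longrightarrow> \<bar>f u - g u\<bar> \<le> e"
  shows "\<bar>Max {f u |u. P u} - Max {g u |u. P u}\<bar> \<le> e"
proof -
  have 1: "Max {f u |u. P u} \<le> Max {g u |u. P u} + e"
  proof (rule MaxP_le[OF assms(1)])
    fix u assume "P u"
    then show "f u \<le> Max {g u |u. P u} + e" using assms(2)[of u] MaxP_ge[of P u g] by linarith
  qed
  have 2: "Max {g u |u. P u} \<le> Max {f u |u. P u} + e"
  proof (rule MaxP_le[OF assms(1)])
    fix u assume "P u"
    then show "g u \<le> Max {f u |u. P u} + e" using assms(2)[of u] MaxP_ge[of P u f] by linarith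
  qed
  show ?thesis using 1 2 by linarith
qed

lemma rhoR_nonneg: "0 \<le> rhoR E \<beta> x"
  unfolding rhoR_def by simp

lemma cum_raise_sum:
  "cum_raise E \<alpha> s n u = (\<Sum>k<n. if s k = u then rhoR E (alpha_seq E \<alpha> s k) u / 2 else 0)"
proof -
  have "{k. k < n \<and> s k = u} = {k \<in> {..<n}. s k = u}" by auto
  then have "cum_raise E \<alpha> s n u = (\<Sum>k\<in>{k \<in> {..<n}. s k = u}. rhoR E (alpha_seq E \<alpha> s k) u / 2)"
    unfolding cum_raise_def by simp
  also have "\<dots> = (\<Sum>k<n. if s k = u then rhoR E (alpha_seq E \<alpha> s k) u / 2 else 0)"
    by (rule sum.inter_filter) simp
  finally show ?thesis .
qed

lemma cum_raise_Suc:
  "cum_raise E \<alpha> s (Suc n) u = cum_raise E \<alpha> s n u + (if s n = u then rhoR E (alpha_seq E \<alpha> s n) u / 2 else 0)"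
  unfolding cum_raise_sum by simp

lemma cum_raise_nonneg: "0 \<le> cum_raise E \<alpha> s n u"
  unfolding cum_raise_sum by (rule sum_nonneg) (simp add: rhoR_nonneg)

lemma alpha_seq_eq: "alpha_seq E \<alpha> s n = alphaR \<alpha> (cum_raise E \<alpha> s n)"
proof (induction n)
  case 0
  then show ?case by (auto simp: alphaR_def cum_raise_def)
next
  case (Suc n)
  show ?case
  proof (intro ext)
    fix a b
    show "alpha_seq E \<alpha> s (Suc n) a b = alphaR \<alpha> (cum_raise E \<alpha> s (Suc n)) a b"
      using Suc rhoR_nonneg[of E "alpha_seq E \<alpha> s n" "s n"]
      by (auto simp: raise_op_def alphaR_def cum_raise_Suc)
  qed
qed

lemma aux_max:
  fixes o1 o2 i1 i2 a b :: real
  assumes "o1 \<le> o2 + b - a" "i2 \<le> i1 + b - a" "a \<le> b"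
  shows "a + max 0 (o1 - i1) / 2 \<le> b + max 0 (o2 - i2) / 2"
  using assms unfolding max_def by (auto simp: field_simps)

lemma G_mono:
  fixes \<alpha> :: "'v::finite \<Rightarrow> 'v \<Rightarrow> real"
  assumes le: "\<And>u. r u \<le> r' u" and ein: "\<exists>u. E u x" and eout: "\<exists>w. E x w"
  shows "r x + rhoR E (alphaR \<alpha> r) x / 2 \<le> r' x + rhoR E (alphaR \<alpha> r') x / 2"
proof -
  have A: "alpha_out E (alphaR \<alpha> r) x \<le> alpha_out E (alphaR \<alpha> r') x + r' x - r x"
    unfolding alpha_out_def
  proof (rule MaxP_le[OF eout])
    fix w assume w: "E x w"
    have "alphaR \<alpha> r x w \<le> alphaR \<alpha> r' x w + r' x - r x" using le[of w] by (simp add: alphaR_def)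
    also have "\<dots> \<le> Max {alphaR \<alpha> r' x w |w. E x w} + r' x - r x"
      using MaxP_ge[of "E x" w "alphaR \<alpha> r' x"] w by simp
    finally show "alphaR \<alpha> r x w \<le> Max {alphaR \<alpha> r' x w |w. E x w} + r' x - r x" .
  qed
  have B: "alpha_in E (alphaR \<alpha> r') x \<le> alpha_in E (alphaR \<alpha> r) x + r' x - r x"
    unfolding alpha_in_def
  proof (rule MaxP_le[OF ein])
    fix u assume u: "E u x"
    have "alphaR \<alpha> r' u x \<le> alphaR \<alpha> r u x + r' x - r x" using le[of u] by (simp add: alphaR_def)
    also have "\<dots> \<le> Max {alphaR \<alpha> r u x |u. E u x} + r' x - r x"
      using MaxP_ge[of "\<lambda>u. E u x" u "\<lambda>u. alphaR \<alpha> r u x"] u by simp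
    finally show "alphaR \<alpha> r' u x \<le> Max {alphaR \<alpha> r u x |u. E u x} + r' x - r x" .
  qed
  show ?thesis
    using aux_max[OF A B le[of x]] unfolding rhoR_def .
qed

lemma least:
  fixes \<alpha> :: "'v::finite \<Rightarrow> 'v \<Rightarrow> real"
  assumes ein: "\<And>x. \<exists>u. E u x" and eout: "\<And>x. \<exists>w. E x w"
    and q0: "\<And>x. 0 \<le> q x" and qb: "\<And>x. rhoR E (alphaR \<alpha> q) x = 0"
  shows "cum_raise E \<alpha> s n u \<le> q u"
proof (induction n arbitrary: u)
  case 0
  then show ?case using q0 by (simp add: cum_raise_def)
next
  case (Suc n)
  show ?case
  proof (cases "s n = u")
    case True
    have "cum_raise E \<alpha> s n u + rhoR E (alphaR \<alpha> (cum_raise E \<alpha> s n)) u / 2 \<le> q u + rhoR E (alphaR \<alpha> q) u / 2"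
      by (rule G_mono) (use Suc ein eout in auto)
    then show ?thesis using True qb[of u] by (simp add: cum_raise_Suc alpha_seq_eq)
  next
    case False
    then show ?thesis using Suc by (simp add: cum_raise_Suc)
  qed
qed

lemma rhoR_lip:
  fixes \<alpha> :: "'v::finite \<Rightarrow> 'v \<Rightarrow> real"
  assumes ein: "\<exists>u. E u x" and eout: "\<exists>w. E x w" and d: "\<And>u. \<bar>r u - r' u\<bar> \<le> e"
  shows "\<bar>rhoR E (alphaR \<alpha> r) x - rhoR E (alphaR \<alpha> r') x\<bar> \<le> 4 * e"
proof -
  have O: "\<bar>alpha_out E (alphaR \<alpha> r) x - alpha_out E (alphaR \<alpha> r') x\<bar> \<le> 2 * e"
    unfolding alpha_out_def
  proof (rule MaxP_lip[OF eout])
    fix w assume "E x w"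
    show "\<bar>alphaR \<alpha> r x w - alphaR \<alpha> r' x w\<bar> \<le> 2 * e"
      using d[of x] d[of w] by (simp add: alphaR_def abs_le_iff)
  qed
  have I: "\<bar>alpha_in E (alphaR \<alpha> r) x - alpha_in E (alphaR \<alpha> r') x\<bar> \<le> 2 * e"
    unfolding alpha_in_def
  proof (rule MaxP_lip[OF ein])
    fix u assume "E u x"
    show "\<bar>alphaR \<alpha> r u x - alphaR \<alpha> r' u x\<bar> \<le> 2 * e"
      using d[of x] d[of u] by (simp add: alphaR_def abs_le_iff)
  qed
  show ?thesis using O I unfolding rhoR_def max_def abs_le_iff by (auto split: if_splits)
qed

lemma balance:
  fixes \<alpha> :: "'v::finite \<Rightarrow> 'v \<Rightarrow> real"
  assumes ein: "\<And>x. \<exists>u. E u x" and eout: "\<And>x. \<exists>w. E x w"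
    and fair: "fair_seq s" and lim: "\<And>u. (\<lambda>n. cum_raise E \<alpha> s n u) \<longlonglongrightarrow> rstar u"
  shows "rhoR E (alphaR \<alpha> rstar) x = 0"
proof (rule ccontr)
  let ?p = "rhoR E (alphaR \<alpha> rstar) x"
  assume "?p \<noteq> 0"
  then have pos: "?p > 0" using rhoR_nonneg[of E "alphaR \<alpha> rstar" x] by linarith
  define e where "e = ?p / 16"
  have e0: "e > 0" using pos by (simp add: e_def)
  have "eventually (\<lambda>n. \<forall>u. dist (cum_raise E \<alpha> s n u) (rstar u) < e) sequentially"
    by (rule eventually_all_finite) (use lim tendstoD e0 in blast)
  then obtain N where N: "\<And>n u. n \<ge> N \<Longrightarrow> \<bar>cum_raise E \<alpha> s n u - rstar u\<bar> < e"
    by (auto simp: eventually_sequentially dist_real_def)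
  from fair obtain n where n: "n \<ge> N" "s n = x"
    unfolding fair_seq_def infinite_nat_iff_unbounded_le by blast
  have step: "cum_raise E \<alpha> s (Suc n) x - cum_raise E \<alpha> s n x = rhoR E (alphaR \<alpha> (cum_raise E \<alpha> s n)) x / 2"
    using n by (simp add: cum_raise_Suc alpha_seq_eq)
  have "\<bar>rhoR E (alphaR \<alpha> (cum_raise E \<alpha> s n)) x - ?p\<bar> \<le> 4 * e"
  proof (rule rhoR_lip)
    fix u show "\<bar>cum_raise E \<alpha> s n u - rstar u\<bar> \<le> e" using N[OF n(1), of u] by linarith
  qed (use ein eout in auto)
  moreover have "\<bar>cum_raise E \<alpha> s (Suc n) x - rstar x\<bar> < e" using N n by simp
  moreover have "\<bar>cum_raise E \<alpha> s n x - rstar x\<bar> < e" using N n by simp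
  ultimately show False using step e_def pos by (simp add: abs_less_iff abs_le_iff)
qed



lemma ain_ge: fixes \<beta> :: "'v::finite \<Rightarrow> 'v \<Rightarrow> real"
  shows "E u x \<Longrightarrow> \<beta> u x \<le> alpha_in E \<beta> x"
  unfolding alpha_in_def by (rule MaxP_ge[of "\<lambda>u. E u x" u "\<lambda>u. \<beta> u x"])

lemma aout_ge: fixes \<beta> :: "'v::finite \<Rightarrow> 'v \<Rightarrow> real"
  shows "E x w \<Longrightarrow> \<beta> x w \<le> alpha_out E \<beta> x"
  unfolding alpha_out_def by (rule MaxP_ge[of "E x" w "\<beta> x"])

lemma ain_att: fixes \<beta> :: "'v::finite \<Rightarrow> 'v \<Rightarrow> real"
  shows "\<exists>u. E u x \<Longrightarrow> \<exists>u. E u x \<and> \<beta> u x = alpha_in E \<beta> x"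
  unfolding alpha_in_def by (rule MaxP_attained[of "\<lambda>u. E u x" "\<lambda>u. \<beta> u x"])

lemma aout_att: fixes \<beta> :: "'v::finite \<Rightarrow> 'v \<Rightarrow> real"
  shows "\<exists>w. E x w \<Longrightarrow> \<exists>w. E x w \<and> \<beta> x w = alpha_out E \<beta> x"
  unfolding alpha_out_def by (rule MaxP_attained[of "E x" "\<beta> x"])

lemma ain_le: fixes \<beta> :: "'v::finite \<Rightarrow> 'v \<Rightarrow> real"
  shows "\<exists>u. E u x \<Longrightarrow> (\<And>u. E u x \<Longrightarrow> \<beta> u x \<le> c) \<Longrightarrow> alpha_in E \<beta> x \<le> c"
  unfolding alpha_in_def by (rule MaxP_le[of "\<lambda>u. E u x" "\<lambda>u. \<beta> u x"])

lemma aout_le: fixes \<beta> :: "'v::finite \<Rightarrow> 'v \<Rightarrow> real"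
  shows "\<exists>w. E x w \<Longrightarrow> (\<And>w. E x w \<Longrightarrow> \<beta> x w \<le> c) \<Longrightarrow> alpha_out E \<beta> x \<le> c"
  unfolding alpha_out_def by (rule MaxP_le[of "E x" "\<beta> x"])

lemma out_le_in_rho: "alpha_out E \<beta> x \<le> alpha_in E \<beta> x + rhoR E \<beta> x"
  unfolding rhoR_def by simp

lemma chainD:
  fixes E :: "'v::finite \<Rightarrow> 'v \<Rightarrow> bool" and \<alpha> :: "'v \<Rightarrow> 'v \<Rightarrow> real"
  assumes ein: "\<And>x. \<exists>u. E u x" and eout: "\<And>x. \<exists>w. E x w"
    and Xb: "\<And>c. c0 < r c \<Longrightarrow> alpha_in E (alphaR \<alpha> r) c \<le> Xb"
  shows "c0 < r u \<Longrightarrow> alpha_in E \<alpha> u \<le> Xb + (\<Sum>c\<in>{c. r u < r c}. rhoR E \<alpha> c)"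
proof (induction "card {c. r u < r c}" arbitrary: u rule: less_induct)
  case less
  obtain w where w: "E w u" "\<alpha> w u = alpha_in E \<alpha> u" using ain_att[of E u \<alpha>] ein by blast
  have sn: "0 \<le> (\<Sum>c\<in>{c. r u < r c}. rhoR E \<alpha> c)" by (rule sum_nonneg) (simp add: rhoR_nonneg)
  show ?case
  proof (cases "r w \<le> r u")
    case True
    have "\<alpha> w u \<le> alphaR \<alpha> r w u" using True by (simp add: alphaR_def)
    also have "\<dots> \<le> alpha_in E (alphaR \<alpha> r) u" using ain_ge[of E w u "alphaR \<alpha> r"] w(1) by simp
    also have "\<dots> \<le> Xb" by (rule Xb[OF less.prems])
    finally show ?thesis using w sn by linarith
  next
    case False
    then have ru: "r u < r w" by simp
    have sub: "{c. r w < r c} \<subset> {c. r u < r c}" using ru by auto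
    have IH: "alpha_in E \<alpha> w \<le> Xb + (\<Sum>c\<in>{c. r w < r c}. rhoR E \<alpha> c)"
      using less.hyps[OF psubset_card_mono[OF _ sub]] less.prems ru by auto
    have "\<alpha> w u \<le> alpha_out E \<alpha> w" using aout_ge[of E w u \<alpha>] w(1) by simp
    also have "\<dots> \<le> alpha_in E \<alpha> w + rhoR E \<alpha> w" by (rule out_le_in_rho)
    also have "\<dots> \<le> Xb + ((\<Sum>c\<in>{c. r w < r c}. rhoR E \<alpha> c) + rhoR E \<alpha> w)" using IH by linarith
    also have "(\<Sum>c\<in>{c. r w < r c}. rhoR E \<alpha> c) + rhoR E \<alpha> w = (\<Sum>c\<in>insert w {c. r w < r c}. rhoR E \<alpha> c)"
      by simp
    also have "\<dots> \<le> (\<Sum>c\<in>{c. r u < r c}. rhoR E \<alpha> c)"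
      by (rule sum_mono2) (use ru sub in \<open>auto simp: rhoR_nonneg\<close>)
    finally show ?thesis using w by simp
  qed
qed

lemma chainD_out:
  fixes E :: "'v::finite \<Rightarrow> 'v \<Rightarrow> bool" and \<alpha> :: "'v \<Rightarrow> 'v \<Rightarrow> real"
  assumes ein: "\<And>x. \<exists>u. E u x" and eout: "\<And>x. \<exists>w. E x w"
    and Xb: "\<And>c. c0 < r c \<Longrightarrow> alpha_in E (alphaR \<alpha> r) c \<le> Xb"
    and u: "c0 < r u"
  shows "alpha_out E \<alpha> u \<le> Xb + (\<Sum>c\<in>{c. c0 < r c}. rhoR E \<alpha> c)"
proof -
  have "alpha_out E \<alpha> u \<le> alpha_in E \<alpha> u + rhoR E \<alpha> u" by (rule out_le_in_rho)
  also have "\<dots> \<le> Xb + ((\<Sum>c\<in>{c. r u < r c}. rhoR E \<alpha> c) + rhoR E \<alpha> u)"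
    using chainD[OF ein eout Xb u] by linarith
  also have "(\<Sum>c\<in>{c. r u < r c}. rhoR E \<alpha> c) + rhoR E \<alpha> u = (\<Sum>c\<in>insert u {c. r u < r c}. rhoR E \<alpha> c)"
    by simp
  also have "\<dots> \<le> (\<Sum>c\<in>{c. c0 < r c}. rhoR E \<alpha> c)"
    by (rule sum_mono2) (use u in \<open>auto simp: rhoR_nonneg\<close>)
  finally show ?thesis by simp
qed



locale balst =
  fixes E :: "'v::finite \<Rightarrow> 'v \<Rightarrow> bool" and \<alpha> :: "'v \<Rightarrow> 'v \<Rightarrow> real" and r :: "'v \<Rightarrow> real"
  assumes ein: "\<And>x. \<exists>u. E u x" and eout: "\<And>x. \<exists>w. E x w"
    and bal: "\<And>x. alpha_out E (alphaR \<alpha> r) x \<le> alpha_in E (alphaR \<alpha> r) x"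
    and least: "\<And>q x. (\<And>y. 0 \<le> q y) \<Longrightarrow> (\<And>y. alpha_out E (alphaR \<alpha> q) y \<le> alpha_in E (alphaR \<alpha> q) y) \<Longrightarrow> r x \<le> q x"
    and nonneg: "\<And>x. 0 \<le> r x"
begin

lemma lower:
  assumes H: "\<And>y. y \<in> Y \<Longrightarrow> \<exists>p. E p y \<and> (\<forall>w. E y w \<longrightarrow>
      alphaR \<alpha> r y w + (if w \<in> Y then 0 else s) \<le> alphaR \<alpha> r p y - (if p \<in> Y then 0 else s))"
    and s0: "0 \<le> s"
  shows "alpha_out E (alphaR \<alpha> (\<lambda>x. if x \<in> Y then r x - s else r x)) x
       \<le> alpha_in E (alphaR \<alpha> (\<lambda>x. if x \<in> Y then r x - s else r x)) x"
proof -
  define q where "q = (\<lambda>x. if x \<in> Y then r x - s else r x)"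
  have id: "\<And>a b. alphaR \<alpha> q a b = alphaR \<alpha> r a b - (if b \<in> Y then s else 0) + (if a \<in> Y then s else 0)"
    by (simp add: q_def alphaR_def)
  have "alpha_out E (alphaR \<alpha> q) x \<le> alpha_in E (alphaR \<alpha> q) x"
  proof (cases "x \<in> Y")
    case True
    obtain p where p: "E p x" "\<And>w. E x w \<Longrightarrow>
      alphaR \<alpha> r x w + (if w \<in> Y then 0 else s) \<le> alphaR \<alpha> r p x - (if p \<in> Y then 0 else s)"
      using H[OF True] by blast
    show ?thesis
    proof (rule aout_le[OF eout])
      fix w assume w: "E x w"
      have "alphaR \<alpha> q x w \<le> alphaR \<alpha> q p x" using p(2)[OF w] True by (auto simp: id split: if_splits)
      also have "\<dots> \<le> alpha_in E (alphaR \<alpha> q) x" using ain_ge[of E p x "alphaR \<alpha> q"] p(1) by simp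
      finally show "alphaR \<alpha> q x w \<le> alpha_in E (alphaR \<alpha> q) x" .
    qed
  next
    case False
    obtain p where p: "E p x" "alphaR \<alpha> r p x = alpha_in E (alphaR \<alpha> r) x"
      using ain_att[of E x "alphaR \<alpha> r"] ein by blast
    show ?thesis
    proof (rule aout_le[OF eout])
      fix w assume w: "E x w"
      have "alphaR \<alpha> q x w \<le> alphaR \<alpha> r x w" using False s0 by (simp add: id)
      also have "\<dots> \<le> alpha_out E (alphaR \<alpha> r) x" using aout_ge[of E x w "alphaR \<alpha> r"] w by simp
      also have "\<dots> \<le> alphaR \<alpha> r p x" using bal[of x] p(2) by simp
      also have "\<dots> \<le> alphaR \<alpha> q p x" using False s0 by (simp add: id)
      also have "\<dots> \<le> alpha_in E (alphaR \<alpha> q) x" using ain_ge[of E p x "alphaR \<alpha> q"] p(1) by simp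
      finally show "alphaR \<alpha> q x w \<le> alpha_in E (alphaR \<alpha> q) x" .
    qed
  qed
  then show ?thesis by (simp add: q_def)
qed

lemma lower_contra:
  assumes H: "\<And>y. y \<in> Y \<Longrightarrow> \<exists>p. E p y \<and> (\<forall>w. E y w \<longrightarrow>
      alphaR \<alpha> r y w + (if w \<in> Y then 0 else s) \<le> alphaR \<alpha> r p y - (if p \<in> Y then 0 else s))"
    and s0: "0 < s" and y0: "y0 \<in> Y" and sr: "\<And>y. y \<in> Y \<Longrightarrow> s \<le> r y"
  shows False
proof -
  define q where "q = (\<lambda>x. if x \<in> Y then r x - s else r x)"
  have "r y0 \<le> q y0"
  proof (rule least)
    fix y show "0 \<le> q y" using sr[of y] nonneg[of y] by (simp add: q_def)
  next
    fix y show "alpha_out E (alphaR \<alpha> q) y \<le> alpha_in E (alphaR \<alpha> q) y"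
      unfolding q_def by (rule lower[OF H]) (use s0 in auto)
  qed
  then show False using y0 s0 by (simp add: q_def)
qed

lemma tight:
  assumes "0 < r x"
  shows "alpha_out E (alphaR \<alpha> r) x = alpha_in E (alphaR \<alpha> r) x"
proof (rule ccontr)
  let ?o = "alpha_out E (alphaR \<alpha> r) x" and ?i = "alpha_in E (alphaR \<alpha> r) x"
  assume "?o \<noteq> ?i"
  then have lt: "?o < ?i" using bal[of x] by linarith
  define s where "s = min (r x) ((?i - ?o) / 2)"
  have s0: "0 < s" using lt assms by (simp add: s_def)
  obtain p where p: "E p x" "alphaR \<alpha> r p x = ?i" using ain_att[of E x "alphaR \<alpha> r"] ein by blast
  show False
  proof (rule lower_contra[of "{x}" s x])
    fix y assume "y \<in> {x}"
    then have y: "y = x" by simp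
    have "\<forall>w. E x w \<longrightarrow> alphaR \<alpha> r x w + (if w \<in> {x} then 0 else s) \<le> alphaR \<alpha> r p x - (if p \<in> {x} then 0 else s)"
    proof (intro allI impI)
      fix w assume w: "E x w"
      have "alphaR \<alpha> r x w \<le> ?o" using aout_ge[of E x w "alphaR \<alpha> r"] w by simp
      moreover have "2 * s \<le> ?i - ?o" unfolding s_def min_def by (auto simp: field_simps)
      ultimately show "alphaR \<alpha> r x w + (if w \<in> {x} then 0 else s) \<le> alphaR \<alpha> r p x - (if p \<in> {x} then 0 else s)"
        using p(2) s0 by auto
    qed
    then show "\<exists>p. E p y \<and> (\<forall>w. E y w \<longrightarrow> alphaR \<alpha> r y w + (if w \<in> {x} then 0 else s) \<le> alphaR \<alpha> r p y - (if p \<in> {x} then 0 else s))"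
      using p(1) y by blast
  next
    fix y assume "y \<in> {x}" then show "s \<le> r y" by (simp add: s_def)
  qed (use s0 in auto)
qed

lemma K:
  assumes vw: "r v < r w"
  shows "\<exists>a b. r v < r a \<and> \<not> r v < r b \<and> E a b \<and>
           alphaR \<alpha> r a b = Max {alpha_in E (alphaR \<alpha> r) c | c. r v < r c}"
proof (rule ccontr)
  define X where "X = Max {alpha_in E (alphaR \<alpha> r) c | c. r v < r c}"
  assume "\<not> (\<exists>a b. r v < r a \<and> \<not> r v < r b \<and> E a b \<and>
           alphaR \<alpha> r a b = Max {alpha_in E (alphaR \<alpha> r) c | c. r v < r c})"
  then have nK: "\<And>a b. r v < r a \<Longrightarrow> E a b \<Longrightarrow> alphaR \<alpha> r a b = X \<Longrightarrow> r v < r b"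
    unfolding X_def by blast
  let ?\<beta> = "alphaR \<alpha> r"
  let ?I = "alpha_in E ?\<beta>"
  have Xge: "\<And>c. r v < r c \<Longrightarrow> ?I c \<le> X"
    unfolding X_def by (rule MaxP_ge[of "\<lambda>c. r v < r c" _ ?I])
  obtain z0 where z0: "r v < r z0" "?I z0 = X"
    using MaxP_attained[of "\<lambda>c. r v < r c" ?I] vw unfolding X_def by auto
  define Z where "Z = {c. r v < r c \<and> ?I c = X}"
  define Rel where "Rel = {(a,b). a \<in> Z \<and> b \<in> Z \<and> E a b \<and> ?\<beta> a b = X}"
  have succ: "\<exists>b. (a,b) \<in> Rel" if a: "a \<in> Z" for a
  proof -
    have ra: "r v < r a" "?I a = X" using a Z_def by auto
    have "0 < r a" using ra nonneg[of v] by linarith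
    then have t: "alpha_out E ?\<beta> a = X" using tight ra by simp
    obtain b where b: "E a b" "?\<beta> a b = alpha_out E ?\<beta> a" using aout_att[of E a ?\<beta>] eout by blast
    have rb: "r v < r b" using nK[OF ra(1) b(1)] b t by simp
    have "X \<le> ?I b" using ain_ge[of E a b ?\<beta>] b t by simp
    with Xge[OF rb] have "?I b = X" by linarith
    then show "\<exists>b. (a,b) \<in> Rel" using a rb b t unfolding Rel_def Z_def by auto
  qed
  have RelZ: "a \<in> Z \<and> b \<in> Z" if "(a,b) \<in> Rel" for a b using that unfolding Rel_def by auto
  have cyc: "\<exists>x. (x,x) \<in> Rel\<^sup>+"
  proof (rule ccontr)
    assume "\<not> (\<exists>x. (x,x) \<in> Rel\<^sup>+)"
    then have acy: "acyclic Rel" unfolding acyclic_def by blast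
    have fin: "finite Rel" by (rule finite_subset[of _ UNIV]) auto
    have wf: "wf (Rel\<inverse>)" by (rule finite_acyclic_wf_converse[OF fin acy])
    have "z0 \<in> Z" using z0 Z_def by auto
    then obtain z where z: "z \<in> Z" "\<And>y. (y,z) \<in> Rel\<inverse> \<Longrightarrow> y \<notin> Z" using wfE_min[OF wf] by metis
    obtain b where "(z,b) \<in> Rel" using succ z(1) by blast
    then show False using z(2)[of b] RelZ by auto
  qed
  then obtain x0 where x0: "(x0,x0) \<in> Rel\<^sup>+" by blast
  define Y where "Y = {y. \<exists>x. (x,x) \<in> Rel\<^sup>+ \<and> (x,y) \<in> Rel\<^sup>+}"
  have trZ: "b \<in> Z" if "(a,b) \<in> Rel\<^sup>+" for a b
    using that by (rule tranclE) (auto dest: RelZ)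
  have YZ: "Y \<subseteq> Z" using trZ Y_def by auto
  have x0Y: "x0 \<in> Y" using x0 Y_def by auto
  have pred: "\<exists>p\<in>Y. (p,y) \<in> Rel" if y: "y \<in> Y" for y
  proof -
    obtain x where x: "(x,x) \<in> Rel\<^sup>+" "(x,y) \<in> Rel\<^sup>+" using y by (auto simp: Y_def)
    from x(2) show ?thesis
    proof (rule tranclE)
      assume "(x,y) \<in> Rel" then show ?thesis using x(1) by (auto simp: Y_def)
    next
      fix c assume "(x,c) \<in> Rel\<^sup>+" "(c,y) \<in> Rel" then show ?thesis using x(1) by (auto simp: Y_def)
    qed
  qed
  have closed: "w \<in> Y" if y: "y \<in> Y" and w: "E y w" "?\<beta> y w = X" for y w
  proof -
    have yZ: "y \<in> Z" using y YZ by auto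
    then have ry: "r v < r y" by (simp add: Z_def)
    have rw: "r v < r w" using nK[OF ry w(1) w(2)] .
    have "X \<le> ?I w" using ain_ge[of E y w ?\<beta>] w by simp
    with Xge[OF rw] have "w \<in> Z" using rw by (simp add: Z_def)
    then have yw: "(y,w) \<in> Rel" using yZ w by (simp add: Rel_def)
    from y obtain x where "(x,x) \<in> Rel\<^sup>+" "(x,y) \<in> Rel\<^sup>+" by (auto simp: Y_def)
    then show "w \<in> Y" using yw unfolding Y_def by (blast intro: trancl_into_trancl)
  qed
  have outX: "?\<beta> y w \<le> X" if y: "y \<in> Y" and w: "E y w" for y w
  proof -
    have "?\<beta> y w \<le> alpha_out E ?\<beta> y" using aout_ge[of E y w ?\<beta>] w by simp
    also have "\<dots> \<le> ?I y" by (rule bal)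
    also have "\<dots> = X" using y YZ by (auto simp: Z_def)
    finally show ?thesis .
  qed
  have strict: "?\<beta> y w < X" if y: "y \<in> Y" and w: "w \<notin> Y" "E y w" for y w
    using outX[OF y w(2)] closed[OF y w(2)] w(1) by force
  define D where "D = (\<lambda>(y,w). X - ?\<beta> y w) ` {(y,w). y \<in> Y \<and> w \<notin> Y \<and> E y w} \<union> r ` Y"
  have finD: "finite D" unfolding D_def by (intro finite_UnI finite_imageI) (rule finite_subset[of _ UNIV]; auto)+
  have Dne: "D \<noteq> {}" using x0Y unfolding D_def by auto
  have Dpos: "0 < d" if "d \<in> D" for d
  proof -
    { fix y w assume "y \<in> Y" "w \<notin> Y" "E y w"
      then have "0 < X - ?\<beta> y w" using strict by force }
    moreover
    { fix y assume "y \<in> Y"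
      then have "0 < r y" using YZ nonneg[of v] by (auto simp: Z_def) }
    ultimately show ?thesis using that unfolding D_def by auto
  qed
  define s where "s = Min D"
  have s0: "0 < s" unfolding s_def using Min_in[OF finD Dne] Dpos by blast
  have sle: "s \<le> d" if "d \<in> D" for d unfolding s_def using Min_le[OF finD that] .
  show False
  proof (rule lower_contra[of Y s x0])
    fix y assume y: "y \<in> Y"
    obtain p where p: "p \<in> Y" "(p,y) \<in> Rel" using pred[OF y] by blast
    then have pe: "E p y" "?\<beta> p y = X" by (auto simp: Rel_def)
    have "\<forall>w. E y w \<longrightarrow> ?\<beta> y w + (if w \<in> Y then 0 else s) \<le> ?\<beta> p y - (if p \<in> Y then 0 else s)"
    proof (intro allI impI)
      fix w assume w: "E y w"
      show "?\<beta> y w + (if w \<in> Y then 0 else s) \<le> ?\<beta> p y - (if p \<in> Y then 0 else s)"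
      proof (cases "w \<in> Y")
        case True
        then show ?thesis using outX[OF y w] pe p(1) by simp
      next
        case False
        have "X - ?\<beta> y w \<in> D" unfolding D_def using y False w by force
        then have "s \<le> X - ?\<beta> y w" by (rule sle)
        then show ?thesis using False pe p(1) by simp
      qed
    qed
    then show "\<exists>p. E p y \<and> (\<forall>w. E y w \<longrightarrow> ?\<beta> y w + (if w \<in> Y then 0 else s) \<le> ?\<beta> p y - (if p \<in> Y then 0 else s))"
      using pe(1) by blast
  next
    fix y assume "y \<in> Y"
    then have "r y \<in> D" unfolding D_def by auto
    then show "s \<le> r y" by (rule sle)
  qed (use s0 x0Y in auto)
qed

lemma gap:
  assumes vw: "r v < r w" and wmin: "\<And>c. r v < r c \<Longrightarrow> r w \<le> r c"
  shows "r w - r v \<le> (\<Sum>c\<in>{c. r v < r c}. rhoR E \<alpha> c)"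
proof -
  define X where "X = Max {alpha_in E (alphaR \<alpha> r) c | c. r v < r c}"
  obtain a b where ab: "r v < r a" "\<not> r v < r b" "E a b" "alphaR \<alpha> r a b = X"
    using K[OF vw] unfolding X_def by blast
  have Xb: "\<And>c. r v < r c \<Longrightarrow> alpha_in E (alphaR \<alpha> r) c \<le> X"
    unfolding X_def by (rule MaxP_ge[of "\<lambda>c. r v < r c" _ "alpha_in E (alphaR \<alpha> r)"])
  have D: "alpha_out E \<alpha> a \<le> X + (\<Sum>c\<in>{c. r v < r c}. rhoR E \<alpha> c)"
    by (rule chainD_out[OF ein eout Xb ab(1)])
  have "\<alpha> a b \<le> alpha_out E \<alpha> a" using aout_ge[of E a b \<alpha>] ab(3) by simp
  moreover have "\<alpha> a b = X + r a - r b" using ab(4) by (simp add: alphaR_def)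
  moreover have "r w \<le> r a" using wmin ab(1) by simp
  ultimately show ?thesis using D ab(2) by linarith
qed

lemma heights:
  "r u - r v \<le> real (card {c. r v < r c}) * (\<Sum>c\<in>{c. r v < r c}. rhoR E \<alpha> c)"
proof (induction "card {c. r v < r c}" arbitrary: v rule: less_induct)
  case less
  let ?S = "{c. r v < r c}"
  have sn: "0 \<le> (\<Sum>c\<in>?S. rhoR E \<alpha> c)" by (rule sum_nonneg) (simp add: rhoR_nonneg)
  show ?case
  proof (cases "r u \<le> r v")
    case True
    have "0 \<le> real (card ?S) * (\<Sum>c\<in>?S. rhoR E \<alpha> c)" using sn by simp
    then show ?thesis using True by linarith
  next
    case False
    then have uS: "u \<in> ?S" by simp
    have fin: "finite (r ` ?S)" by simp
    have ne: "r ` ?S \<noteq> {}" using uS by blast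
    obtain w where w: "w \<in> ?S" "r w = Min (r ` ?S)" using Min_in[OF fin ne] by auto
    have wmin: "\<And>c. r v < r c \<Longrightarrow> r w \<le> r c" using Min_le[OF fin] w(2) by auto
    let ?Sw = "{c. r w < r c}"
    have sub: "?Sw \<subset> ?S" using w(1) by auto
    have cardlt: "card ?Sw < card ?S" by (rule psubset_card_mono) (use sub in auto)
    have IH: "r u - r w \<le> real (card ?Sw) * (\<Sum>c\<in>?Sw. rhoR E \<alpha> c)"
      using less.hyps[OF cardlt] .
    have G: "r w - r v \<le> (\<Sum>c\<in>?S. rhoR E \<alpha> c)" using gap[OF _ wmin] w(1) by simp
    have sm: "(\<Sum>c\<in>?Sw. rhoR E \<alpha> c) \<le> (\<Sum>c\<in>?S. rhoR E \<alpha> c)"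
      by (rule sum_mono2) (use sub in \<open>auto simp: rhoR_nonneg\<close>)
    have m1: "real (card ?Sw) * (\<Sum>c\<in>?Sw. rhoR E \<alpha> c) \<le> real (card ?Sw) * (\<Sum>c\<in>?S. rhoR E \<alpha> c)"
      by (rule mult_left_mono[OF sm]) simp
    have "real (card ?Sw) + 1 \<le> real (card ?S)" using cardlt by linarith
    then have m2: "(real (card ?Sw) + 1) * (\<Sum>c\<in>?S. rhoR E \<alpha> c) \<le> real (card ?S) * (\<Sum>c\<in>?S. rhoR E \<alpha> c)"
      by (rule mult_right_mono[OF _ sn])
    have "(real (card ?Sw) + 1) * (\<Sum>c\<in>?S. rhoR E \<alpha> c) = real (card ?Sw) * (\<Sum>c\<in>?S. rhoR E \<alpha> c) + (\<Sum>c\<in>?S. rhoR E \<alpha> c)"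
      by (simp add: algebra_simps)
    then show ?thesis using IH G m1 m2 by linarith
  qed
qed

lemma Sset_eq: "Sset r v = {c. r v < r c}"
  by (auto simp: Sset_def height_def)

lemma level_eq: "level E \<alpha> r u = alpha_in E (alphaR \<alpha> r) u"
  by (simp add: level_def alpha_in_def)

lemma part1: "momentum E \<alpha> r v \<le> rho_set E \<alpha> (Sset r v) + zval E \<alpha> r v"
proof -
  define Xb where "Xb = Max {level E \<alpha> r u | u. height r u \<le> height r v}"
  have zv: "zval E \<alpha> r v = Xb - level E \<alpha> r v" by (simp add: zval_def Xb_def)
  have Xge: "level E \<alpha> r c \<le> Xb" if "r v \<le> r c" for c
    unfolding Xb_def by (rule MaxP_ge[of "\<lambda>u. height r u \<le> height r v" c "level E \<alpha> r"]) (use that in \<open>simp add: height_def\<close>)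
  have Xb': "\<And>c. r v < r c \<Longrightarrow> alpha_in E (alphaR \<alpha> r) c \<le> Xb" using Xge by (simp add: level_eq)
  have rs: "rho_set E \<alpha> (Sset r v) = (\<Sum>c\<in>{c. r v < r c}. rhoR E \<alpha> c)"
    by (simp add: rho_set_def Sset_eq)
  have sn: "0 \<le> (\<Sum>c\<in>{c. r v < r c}. rhoR E \<alpha> c)" by (rule sum_nonneg) (simp add: rhoR_nonneg)
  have z0: "level E \<alpha> r v \<le> Xb" using Xge by simp
  show ?thesis
    unfolding momentum_def
  proof (rule MaxP_le[of "\<lambda>u. E u v"])
    show "\<exists>u. E u v" by (rule ein)
  next
    fix u assume u: "E u v"
    show "\<alpha> u v - level E \<alpha> r v \<le> rho_set E \<alpha> (Sset r v) + zval E \<alpha> r v"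
    proof (cases "r u \<le> r v")
      case True
      have "\<alpha> u v \<le> alphaR \<alpha> r u v" using True by (simp add: alphaR_def)
      also have "\<dots> \<le> level E \<alpha> r v" using ain_ge[of E u v "alphaR \<alpha> r"] u by (simp add: level_eq)
      finally show ?thesis using zv rs sn z0 by linarith
    next
      case False
      then have ru: "r v < r u" by simp
      have "\<alpha> u v \<le> alpha_out E \<alpha> u" using aout_ge[of E u v \<alpha>] u by simp
      also have "\<dots> \<le> Xb + (\<Sum>c\<in>{c. r v < r c}. rhoR E \<alpha> c)"
        by (rule chainD_out[OF ein eout Xb' ru])
      finally show ?thesis using zv rs by linarith
    qed
  qed
qed

lemma part2: "height r v - Min (range (height r)) \<le> real (card (Sset r v)) * rho_set E \<alpha> (Sset r v)"
proof -
  have "Min (range (height r)) \<in> range (height r)" by (rule Min_in) auto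
  then obtain u where u: "Min (range (height r)) = height r u" by (metis imageE)
  show ?thesis using heights[of u v] u by (simp add: height_def rho_set_def Sset_eq)
qed

end

theorem lemma6:
  fixes E :: "'v::finite \<Rightarrow> 'v \<Rightarrow> bool"
    and \<alpha> :: "'v \<Rightarrow> 'v \<Rightarrow> real"
    and s :: "nat \<Rightarrow> 'v"
    and rstar :: "'v \<Rightarrow> real"
    and v :: 'v
  assumes "strongly_connected E"
    and "fair_seq s"
    and "\<And>u. (\<lambda>n. cum_raise E \<alpha> s n u) \<longlonglongrightarrow> rstar u"
  shows "momentum E \<alpha> rstar v \<le> rho_set E \<alpha> (Sset rstar v) + zval E \<alpha> rstar v
       \<and> height rstar v - Min (range (height rstar))
           \<le> real (card (Sset rstar v)) * rho_set E \<alpha> (Sset rstar v)"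
proof -
  have sc: "\<And>x. E\<^sup>+\<^sup>+ x x" using assms(1) unfolding strongly_connected_def by blast
  have ein: "\<And>x. \<exists>u. E u x"
  proof -
    fix x from sc[of x] show "\<exists>u. E u x" by (rule tranclp.cases) auto
  qed
  have eout: "\<And>x. \<exists>w. E x w" using sc tranclpD by metis
  have lim: "\<And>u. (\<lambda>n. cum_raise E \<alpha> s n u) \<longlonglongrightarrow> rstar u" by (rule assms(3))
  interpret balst E \<alpha> rstar
  proof
    fix x show "\<exists>u. E u x" by (rule ein)
  next
    fix x show "\<exists>w. E x w" by (rule eout)
  next
    fix x
    have "rhoR E (alphaR \<alpha> rstar) x = 0" by (rule balance[OF ein eout assms(2) lim])
    then show "alpha_out E (alphaR \<alpha> rstar) x \<le> alpha_in E (alphaR \<alpha> rstar) x"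
      unfolding rhoR_def by (simp add: max_def split: if_splits)
  next
    fix q :: "'v \<Rightarrow> real" and x
    assume q0: "\<And>y. 0 \<le> q y" and qb: "\<And>y. alpha_out E (alphaR \<alpha> q) y \<le> alpha_in E (alphaR \<alpha> q) y"
    have qr: "\<And>y. rhoR E (alphaR \<alpha> q) y = 0"
    proof -
      fix y show "rhoR E (alphaR \<alpha> q) y = 0" using qb[of y] unfolding rhoR_def by simp
    qed
    show "rstar x \<le> q x"
      by (rule LIMSEQ_le_const2[OF lim]) (use least[OF ein eout q0 qr] in auto)
  next
    fix x show "0 \<le> rstar x"
      by (rule LIMSEQ_le_const[OF lim]) (use cum_raise_nonneg[of E \<alpha> s] in blast)
  qed
  show ?thesis using part1 part2 by blast
qed

end
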